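(* Let $(g,[\cdot,\cdot]_1,[\cdot,\cdot]_2,\alpha,\beta)$ be a compatible BiHom-Lie algebra and $(V,\bullet_1,\bullet_2,\alpha_V,\beta_V)$ a representation of it, where $\alpha,\beta,\alpha_V,\beta_V$ are bijective. Then $g\oplus V$ carries a compatible BiHom-Lie algebra structure $(g\oplus V,[\cdot,\cdot]^{\ltimes}_1,[\cdot,\cdot]^{\ltimes}_2,\alpha\oplus\alpha_V,\beta\oplus\beta_V)$, where $(\alpha\oplus\alpha_V)(p,a)=(\alpha(p),\alpha_V(a))$, $(\beta\oplus\beta_V)(p,a)=(\beta(p),\beta_V(a))$ and, for $i=1,2$, $$[(p,a),(q,b)]^{\ltimes}_i=\big([p,q]_i,\ p\bullet_i b-(\alpha^{-1}\beta(q))\bullet_i(\alpha_V\beta_V^{-1}(a))\big),\qquad (p,a),(q,b)\in g\oplus V.$$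
   Context: A BiHom-Lie algebra is a 4-tuple $(g,[\cdot,\cdot],\alpha,\beta)$ with $\alpha,\beta:g\to g$ linear and $[\cdot,\cdot]$ bilinear such that $\alpha\circ\beta=\beta\circ\alpha$, $[\beta(p),\alpha(q)]=-[\beta(q),\alpha(p)]$ and $[\beta^{2}(p),[\beta(q),\alpha(r)]]+[\beta^{2}(q),[\beta(r),\alpha(p)]]+[\beta^{2}(r),[\beta(p),\alpha(q)]]=0$. A compatible BiHom-Lie algebra $(g,[\cdot,\cdot]_1,[\cdot,\cdot]_2,\alpha,\beta)$: both $(g,[\cdot,\cdot]_i,\alpha,\beta)$ are BiHom-Lie algebras and $(g,\lambda[\cdot,\cdot]_1+\eta[\cdot,\cdot]_2,\alpha,\beta)$ is a BiHom-Lie algebra for all $\lambda,\eta\in\mathbb{K}$. A representation of a BiHom-Lie algebra $(g,[\cdot,\cdot],\alpha,\beta)$ is $(V,\bullet,\alpha_V,\beta_V)$ with $\alpha_V,\beta_V:V\to V$ commuting linear maps and $\bullet:g\otimes V\to V$ bilinear satisfying, for all $p,q\in g$, $v\in V$: $\alpha(p)\bullet\alpha_V(v)=\alpha_V(p\bullet v)$; $\beta(p)\bullet\beta_V(v)=\beta_V(p\bullet v)$; $[\beta(p),q]\bullet\beta_V(v)=\alpha\beta(p)\bullet(q\bullet v)-\beta(q)\bullet(\alpha(p)\bullet v)$. A representation of the compatible BiHom-Lie algebra is $(V,\bullet_1,\bullet_2,\alpha_V,\beta_V)$ such that $(V,\bullet_i,\alpha_V,\beta_V)$ is a representation of $(g,[\cdot,\cdot]_i,\alpha,\beta)$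 for $i=1,2$ and $[\beta(p),q]_1\bullet_2\beta_V(v)+[\beta(p),q]_2\bullet_1\beta_V(v)=\alpha\beta(p)\bullet_1(q\bullet_2 v)-\beta(q)\bullet_2(\alpha(p)\bullet_1 v)+\alpha\beta(p)\bullet_2(q\bullet_1 v)-\beta(q)\bullet_1(\alpha(p)\bullet_2 v)$ for all $p,q\in g$, $v\in V$. *)

theory Defs
  imports Main "HOL.Vector_Spaces" "HOL-Library.Product_Plus"
begin

definition bilinear_map ::
  "('k::field \<Rightarrow> 'a::ab_group_add \<Rightarrow> 'a) \<Rightarrow> ('k \<Rightarrow> 'b::ab_group_add \<Rightarrow> 'b) \<Rightarrow>
   ('k \<Rightarrow> 'c::ab_group_add \<Rightarrow> 'c) \<Rightarrow> ('a \<Rightarrow> 'b \<Rightarrow> 'c) \<Rightarrow> bool" where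
  "bilinear_map s1 s2 s3 f \<longleftrightarrow>
     (\<forall>x. Vector_Spaces.linear s2 s3 (f x)) \<and> (\<forall>y. Vector_Spaces.linear s1 s3 (\<lambda>x. f x y))"

definition bihom_lie_algebra ::
  "('k::field \<Rightarrow> 'g::ab_group_add \<Rightarrow> 'g) \<Rightarrow> ('g \<Rightarrow> 'g \<Rightarrow> 'g) \<Rightarrow> ('g \<Rightarrow> 'g) \<Rightarrow> ('g \<Rightarrow> 'g) \<Rightarrow> bool" where
  "bihom_lie_algebra s br \<alpha> \<beta> \<longleftrightarrow>
     vector_space s \<and>
     Vector_Spaces.linear s s \<alpha> \<and> Vector_Spaces.linear s s \<beta> \<and>
     bilinear_map s s s br \<and>
     \<alpha> \<circ> \<beta> = \<beta> \<circ> \<alpha> \<and>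
     (\<forall>p q. br (\<beta> p) (\<alpha> q) = - br (\<beta> q) (\<alpha> p)) \<and>
     (\<forall>p q r. br (\<beta> (\<beta> p)) (br (\<beta> q) (\<alpha> r)) + br (\<beta> (\<beta> q)) (br (\<beta> r) (\<alpha> p))
              + br (\<beta> (\<beta> r)) (br (\<beta> p) (\<alpha> q)) = 0)"

definition compatible_bihom_lie_algebra ::
  "('k::field \<Rightarrow> 'g::ab_group_add \<Rightarrow> 'g) \<Rightarrow> ('g \<Rightarrow> 'g \<Rightarrow> 'g) \<Rightarrow> ('g \<Rightarrow> 'g \<Rightarrow> 'g) \<Rightarrow>
   ('g \<Rightarrow> 'g) \<Rightarrow> ('g \<Rightarrow> 'g) \<Rightarrow> bool" where
  "compatible_bihom_lie_algebra s br1 br2 \<alpha> \<beta> \<longleftrightarrow>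
     bihom_lie_algebra s br1 \<alpha> \<beta> \<and> bihom_lie_algebra s br2 \<alpha> \<beta> \<and>
     (\<forall>c d. bihom_lie_algebra s (\<lambda>x y. s c (br1 x y) + s d (br2 x y)) \<alpha> \<beta>)"

definition bihom_lie_rep ::
  "('k::field \<Rightarrow> 'g::ab_group_add \<Rightarrow> 'g) \<Rightarrow> ('g \<Rightarrow> 'g \<Rightarrow> 'g) \<Rightarrow> ('g \<Rightarrow> 'g) \<Rightarrow> ('g \<Rightarrow> 'g) \<Rightarrow>
   ('k \<Rightarrow> 'v::ab_group_add \<Rightarrow> 'v) \<Rightarrow> ('g \<Rightarrow> 'v \<Rightarrow> 'v) \<Rightarrow> ('v \<Rightarrow> 'v) \<Rightarrow> ('v \<Rightarrow> 'v) \<Rightarrow> bool" where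
  "bihom_lie_rep s br \<alpha> \<beta> sV act \<alpha>V \<beta>V \<longleftrightarrow>
     vector_space sV \<and>
     Vector_Spaces.linear sV sV \<alpha>V \<and> Vector_Spaces.linear sV sV \<beta>V \<and>
     \<alpha>V \<circ> \<beta>V = \<beta>V \<circ> \<alpha>V \<and>
     bilinear_map s sV sV act \<and>
     (\<forall>p v. act (\<alpha> p) (\<alpha>V v) = \<alpha>V (act p v)) \<and>
     (\<forall>p v. act (\<beta> p) (\<beta>V v) = \<beta>V (act p v)) \<and>
     (\<forall>p q v. act (br (\<beta> p) q) (\<beta>V v) = act (\<alpha> (\<beta> p)) (act q v) - act (\<beta> q) (act (\<alpha> p) v))"

definition compatible_bihom_lie_rep ::
  "('k::field \<Rightarrow> 'g::ab_group_add \<Rightarrow> 'g) \<Rightarrow> ('g \<Rightarrow> 'g \<Rightarrow> 'g) \<Rightarrow> ('g \<Rightarrow> 'g \<Rightarrow> 'g) \<Rightarrow>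
   ('g \<Rightarrow> 'g) \<Rightarrow> ('g \<Rightarrow> 'g) \<Rightarrow>
   ('k \<Rightarrow> 'v::ab_group_add \<Rightarrow> 'v) \<Rightarrow> ('g \<Rightarrow> 'v \<Rightarrow> 'v) \<Rightarrow> ('g \<Rightarrow> 'v \<Rightarrow> 'v) \<Rightarrow>
   ('v \<Rightarrow> 'v) \<Rightarrow> ('v \<Rightarrow> 'v) \<Rightarrow> bool" where
  "compatible_bihom_lie_rep s br1 br2 \<alpha> \<beta> sV act1 act2 \<alpha>V \<beta>V \<longleftrightarrow>
     bihom_lie_rep s br1 \<alpha> \<beta> sV act1 \<alpha>V \<beta>V \<and>
     bihom_lie_rep s br2 \<alpha> \<beta> sV act2 \<alpha>V \<beta>V \<and>
     (\<forall>p q v. act2 (br1 (\<beta> p) q) (\<beta>V v) + act1 (br2 (\<beta> p) q) (\<beta>V v) =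
        act1 (\<alpha> (\<beta> p)) (act2 q v) - act2 (\<beta> q) (act1 (\<alpha> p) v)
        + act2 (\<alpha> (\<beta> p)) (act1 q v) - act1 (\<beta> q) (act2 (\<alpha> p) v))"

definition sum_scale :: "('k \<Rightarrow> 'g \<Rightarrow> 'g) \<Rightarrow> ('k \<Rightarrow> 'v \<Rightarrow> 'v) \<Rightarrow> 'k \<Rightarrow> 'g \<times> 'v \<Rightarrow> 'g \<times> 'v" where
  "sum_scale s sV c x = (s c (fst x), sV c (snd x))"

definition sum_map :: "('g \<Rightarrow> 'g) \<Rightarrow> ('v \<Rightarrow> 'v) \<Rightarrow> 'g \<times> 'v \<Rightarrow> 'g \<times> 'v" where
  "sum_map f fV x = (f (fst x), fV (snd x))"

definition semidirect_bracket ::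
  "('g \<Rightarrow> 'g \<Rightarrow> 'g) \<Rightarrow> ('g \<Rightarrow> 'v::ab_group_add \<Rightarrow> 'v) \<Rightarrow> ('g \<Rightarrow> 'g) \<Rightarrow> ('g \<Rightarrow> 'g) \<Rightarrow>
   ('v \<Rightarrow> 'v) \<Rightarrow> ('v \<Rightarrow> 'v) \<Rightarrow> 'g \<times> 'v \<Rightarrow> 'g \<times> 'v \<Rightarrow> 'g \<times> 'v" where
  "semidirect_bracket br act \<alpha> \<beta> \<alpha>V \<beta>V x y =
     (br (fst x) (fst y),
      act (fst x) (snd y) - act (inv \<alpha> (\<beta> (fst y))) (\<alpha>V (inv \<beta>V (snd x))))"

end

theory Submission
  imports Defs
begin

lemma lin_add: "Vector_Spaces.linear s1 s2 f \<Longrightarrow> f (x+y) = f x + f y"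
  by (simp add: linear_iff)
lemma lin_scale: "Vector_Spaces.linear s1 s2 f \<Longrightarrow> f (s1 c x) = s2 c (f x)"
  by (simp add: linear_iff)
lemma lin_diff: "Vector_Spaces.linear s1 s2 f \<Longrightarrow> f (x-y) = f x - f y"
proof -
  assume l: "Vector_Spaces.linear s1 s2 f"
  have "f (x - y) + f y = f x" using lin_add[OF l, of "x-y" y] by simp
  then show ?thesis by (simp add: eq_diff_eq)
qed
lemma lin_neg: "Vector_Spaces.linear s1 s2 f \<Longrightarrow> f (-x) = - f x"
  using lin_diff[of s1 s2 f 0 x] lin_diff[of s1 s2 f 0 0] by simp

lemma lin_inv:
  assumes l: "Vector_Spaces.linear s s f" and b: "bij f"
  shows "Vector_Spaces.linear s s (inv f)"
proof -
  have fi: "f (inv f x) = x" for x using b by (simp add: bij_is_surj surj_f_inv_f)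
  have if_: "inv f (f x) = x" for x using b by (simp add: bij_is_inj inv_f_f)
  have "inv f (x + y) = inv f x + inv f y" for x y
    by (metis fi if_ lin_add[OF l])
  moreover have "inv f (s c x) = s c (inv f x)" for c x
    by (metis fi if_ lin_scale[OF l])
  ultimately show ?thesis using l by (simp add: linear_iff)
qed

lemma vs_sum:
  assumes "vector_space s" "vector_space sV"
  shows "vector_space (sum_scale s sV)"
  using assms unfolding vector_space_def sum_scale_def
  by (auto simp: algebra_simps)

lemma lin_sum_map:
  assumes "vector_space s" "vector_space sV"
    "Vector_Spaces.linear s s f" "Vector_Spaces.linear sV sV g"
  shows "Vector_Spaces.linear (sum_scale s sV) (sum_scale s sV) (sum_map f g)"
  using assms vs_sum[OF assms(1,2)]
  by (simp add: linear_iff sum_map_def sum_scale_def)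

lemma pair0: "((a, b) = 0) = (a = 0 \<and> b = 0)" by (simp add: zero_prod_def)

lemma semidirect:
  assumes A: "bihom_lie_algebra s br \<alpha> \<beta>"
    and R: "bihom_lie_rep s br \<alpha> \<beta> sV act \<alpha>V \<beta>V"
    and ba: "bij \<alpha>" and bb: "bij \<beta>" and baV: "bij \<alpha>V" and bbV: "bij \<beta>V"
  shows "bihom_lie_algebra (sum_scale s sV) (semidirect_bracket br act \<alpha> \<beta> \<alpha>V \<beta>V)
           (sum_map \<alpha> \<alpha>V) (sum_map \<beta> \<beta>V)"
proof -
  have vs: "vector_space s" and la: "Vector_Spaces.linear s s \<alpha>" and lb: "Vector_Spaces.linear s s \<beta>"
    and bl: "bilinear_map s s s br" and ab: "\<alpha> \<circ> \<beta> = \<beta> \<circ> \<alpha>"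
    and skew: "\<And>p q. br (\<beta> p) (\<alpha> q) = - br (\<beta> q) (\<alpha> p)"
    and jac: "\<And>p q r. br (\<beta> (\<beta> p)) (br (\<beta> q) (\<alpha> r)) + br (\<beta> (\<beta> q)) (br (\<beta> r) (\<alpha> p))
              + br (\<beta> (\<beta> r)) (br (\<beta> p) (\<alpha> q)) = 0"
    using A unfolding bihom_lie_algebra_def by blast+
  have vsV: "vector_space sV" and laV: "Vector_Spaces.linear sV sV \<alpha>V"
    and lbV: "Vector_Spaces.linear sV sV \<beta>V" and abV: "\<alpha>V \<circ> \<beta>V = \<beta>V \<circ> \<alpha>V"
    and blact: "bilinear_map s sV sV act"
    and ca: "\<And>p v. act (\<alpha> p) (\<alpha>V v) = \<alpha>V (act p v)"
    and cb: "\<And>p v. act (\<beta> p) (\<beta>V v) = \<beta>V (act p v)"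
    and rep: "\<And>p q v. act (br (\<beta> p) q) (\<beta>V v) = act (\<alpha> (\<beta> p)) (act q v) - act (\<beta> q) (act (\<alpha> p) v)"
    using R unfolding bihom_lie_rep_def by blast+
  have lia: "Vector_Spaces.linear s s (inv \<alpha>)" by (rule lin_inv[OF la ba])
  have libV: "Vector_Spaces.linear sV sV (inv \<beta>V)" by (rule lin_inv[OF lbV bbV])
  have liaV: "Vector_Spaces.linear sV sV (inv \<alpha>V)" by (rule lin_inv[OF laV baV])
  have ia1[simp]: "\<alpha> (inv \<alpha> x) = x" "inv \<alpha> (\<alpha> x) = x" for x
    using ba by (simp_all add: bij_is_surj surj_f_inv_f bij_is_inj inv_f_f)
  have ib1[simp]: "\<beta> (inv \<beta> x) = x" "inv \<beta> (\<beta> x) = x" for x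
    using bb by (simp_all add: bij_is_surj surj_f_inv_f bij_is_inj inv_f_f)
  have iaV1[simp]: "\<alpha>V (inv \<alpha>V x) = x" "inv \<alpha>V (\<alpha>V x) = x" for x
    using baV by (simp_all add: bij_is_surj surj_f_inv_f bij_is_inj inv_f_f)
  have ibV1[simp]: "\<beta>V (inv \<beta>V x) = x" "inv \<beta>V (\<beta>V x) = x" for x
    using bbV by (simp_all add: bij_is_surj surj_f_inv_f bij_is_inj inv_f_f)
  have abx: "\<alpha> (\<beta> x) = \<beta> (\<alpha> x)" for x using fun_cong[OF ab, of x] by simp
  have abVx: "\<alpha>V (\<beta>V x) = \<beta>V (\<alpha>V x)" for x using fun_cong[OF abV, of x] by simp
  have iab[simp]: "inv \<alpha> (\<beta> (\<alpha> x)) = \<beta> x" for x by (simp flip: abx)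
  have iaVbV: "inv \<alpha>V (\<beta>V x) = \<beta>V (inv \<alpha>V x)" for x
  proof -
    have "\<alpha>V (\<beta>V (inv \<alpha>V x)) = \<beta>V x" by (simp add: abVx)
    then show ?thesis by (metis iaV1(2))
  qed
  have ibVaV: "inv \<beta>V (\<alpha>V x) = \<alpha>V (inv \<beta>V x)" for x
  proof -
    have "\<beta>V (\<alpha>V (inv \<beta>V x)) = \<alpha>V x" by (simp flip: abVx)
    then show ?thesis by (metis ibV1(2))
  qed
  have brl: "Vector_Spaces.linear s s (br x)" "Vector_Spaces.linear s s (\<lambda>y. br y x)" for x
    using bl unfolding bilinear_map_def by auto
  have actl: "Vector_Spaces.linear sV sV (act x)" "Vector_Spaces.linear s sV (\<lambda>y. act y v)" for x v
    using blact unfolding bilinear_map_def by auto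
  note actr = lin_add[OF actl(1)] lin_diff[OF actl(1)] lin_neg[OF actl(1)] lin_scale[OF actl(1)]
  note actlf = lin_add[OF actl(2)] lin_diff[OF actl(2)] lin_neg[OF actl(2)] lin_scale[OF actl(2)]
  note actrs = actr actlf[simplified]
  have vsS: "vector_space (sum_scale s sV)" by (rule vs_sum[OF vs vsV])
  have scd: "sV c (x - y) = sV c x - sV c y" for c x y
    by (rule module.scale_right_diff_distrib) (simp add: module_iff_vector_space vsV)
  have L1: "act (inv \<alpha> X) w = inv \<alpha>V (act X (\<alpha>V w))" for X w
  proof -
    have "act X (\<alpha>V w) = \<alpha>V (act (inv \<alpha> X) w)" using ca[of "inv \<alpha> X" w] by simp
    then show ?thesis by simp
  qed
  have L2: "act (\<alpha> p) w = \<alpha>V (act p (inv \<alpha>V w))" for p w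
    using ca[of p "inv \<alpha>V w"] by simp
  have K: "act (inv \<alpha> (\<beta> (br (\<beta> q) (\<alpha> r)))) (\<alpha>V (\<beta>V w)) =
      act (\<beta> (\<beta> q)) (act (\<beta> r) (\<alpha>V w)) - act (\<beta> (\<beta> r)) (act (\<beta> q) (\<alpha>V w))" for q r w
  proof -
    define v where "v = inv \<beta>V (\<alpha>V (\<alpha>V w))"
    have v: "\<beta>V v = \<alpha>V (\<alpha>V w)" "\<beta>V (inv \<alpha>V v) = \<alpha>V w"
      unfolding v_def by (simp_all add: ibVaV iaVbV[symmetric] flip: abVx)
    have "act (inv \<alpha> (\<beta> (br (\<beta> q) (\<alpha> r)))) (\<alpha>V (\<beta>V w))
        = inv \<alpha>V (act (\<beta> (br (\<beta> q) (\<alpha> r))) (\<beta>V (\<alpha>V (\<alpha>V w))))"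
      by (simp add: L1 abVx)
    also have "\<dots> = inv \<alpha>V (\<beta>V (act (br (\<beta> q) (\<alpha> r)) (\<beta>V v)))"
      by (simp add: cb v)
    also have "\<dots> = inv \<alpha>V (\<beta>V (act (\<alpha> (\<beta> q)) (act (\<alpha> r) v))) - inv \<alpha>V (\<beta>V (act (\<beta> (\<alpha> r)) (act (\<alpha> q) v)))"
      by (simp add: rep lin_diff[OF lbV] lin_diff[OF liaV])
    also have "inv \<alpha>V (\<beta>V (act (\<alpha> (\<beta> q)) (act (\<alpha> r) v))) = act (\<beta> (\<beta> q)) (act (\<beta> r) (\<alpha>V w))"
    proof -
      have "inv \<alpha>V (\<beta>V (act (\<alpha> (\<beta> q)) (act (\<alpha> r) v))) = inv \<alpha>V (\<beta>V (\<alpha>V (act (\<beta> q) (act r (inv \<alpha>V v)))))"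
        by (simp add: L2[of r] ca)
      also have "\<dots> = \<beta>V (act (\<beta> q) (act r (inv \<alpha>V v)))" by (simp add: abVx[symmetric])
      also have "\<dots> = act (\<beta> (\<beta> q)) (act (\<beta> r) (\<beta>V (inv \<alpha>V v)))" by (simp add: cb)
      finally show ?thesis by (simp add: v)
    qed
    also have "inv \<alpha>V (\<beta>V (act (\<beta> (\<alpha> r)) (act (\<alpha> q) v))) = act (\<beta> (\<beta> r)) (act (\<beta> q) (\<alpha>V w))"
    proof -
      have "inv \<alpha>V (\<beta>V (act (\<beta> (\<alpha> r)) (act (\<alpha> q) v))) = inv \<alpha>V (\<beta>V (\<alpha>V (act (\<beta> r) (act q (inv \<alpha>V v)))))"
        by (simp add: L2[of q] ca abx[symmetric])
      also have "\<dots> = \<beta>V (act (\<beta> r) (act q (inv \<alpha>V v)))" by (simp add: abVx[symmetric])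
      also have "\<dots> = act (\<beta> (\<beta> r)) (act (\<beta> q) (\<beta>V (inv \<alpha>V v)))" by (simp add: cb)
      finally show ?thesis by (simp add: v)
    qed
    finally show ?thesis .
  qed
  have K': "act (inv \<alpha> (\<beta> (br (\<beta> q) (\<alpha> r)))) (\<beta>V (\<alpha>V w)) =
      act (\<beta> (\<beta> q)) (act (\<beta> r) (\<alpha>V w)) - act (\<beta> (\<beta> r)) (act (\<beta> q) (\<alpha>V w))" for q r w
    using K[of q r w] by (simp add: abVx)
  have bil: "bilinear_map (sum_scale s sV) (sum_scale s sV) (sum_scale s sV)
      (semidirect_bracket br act \<alpha> \<beta> \<alpha>V \<beta>V)"
    unfolding bilinear_map_def linear_iff
    using vsS
    by (simp add: semidirect_bracket_def sum_scale_def lin_add[OF brl(1)] lin_add[OF brl(2)]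
        lin_scale[OF brl(1)] lin_scale[OF brl(2)] actrs lin_add[OF lb] lin_scale[OF lb]
        lin_add[OF lia] lin_scale[OF lia] lin_add[OF libV] lin_scale[OF libV]
        lin_add[OF laV] lin_scale[OF laV] scd algebra_simps)
  show ?thesis
    unfolding bihom_lie_algebra_def
  proof (intro conjI allI)
    show "vector_space (sum_scale s sV)" by (rule vsS)
    show "Vector_Spaces.linear (sum_scale s sV) (sum_scale s sV) (sum_map \<alpha> \<alpha>V)"
      by (rule lin_sum_map[OF vs vsV la laV])
    show "Vector_Spaces.linear (sum_scale s sV) (sum_scale s sV) (sum_map \<beta> \<beta>V)"
      by (rule lin_sum_map[OF vs vsV lb lbV])
    show "bilinear_map (sum_scale s sV) (sum_scale s sV) (sum_scale s sV)
      (semidirect_bracket br act \<alpha> \<beta> \<alpha>V \<beta>V)" by (rule bil)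
    show "sum_map \<alpha> \<alpha>V \<circ> sum_map \<beta> \<beta>V = sum_map \<beta> \<beta>V \<circ> sum_map \<alpha> \<alpha>V"
      by (simp add: fun_eq_iff sum_map_def abx abVx)
    let ?b = "semidirect_bracket br act \<alpha> \<beta> \<alpha>V \<beta>V"
    let ?A = "sum_map \<alpha> \<alpha>V" and ?B = "sum_map \<beta> \<beta>V"
    have skS: "?b (?B x) (?A y) = - ?b (?B y) (?A x)" for x y
    proof -
      obtain p a where x: "x = (p, a)" by fastforce
      obtain q b where y: "y = (q, b)" by fastforce
      show ?thesis unfolding x y by (simp add: semidirect_bracket_def sum_map_def skew[of p q])
    qed
    have jacS: "?b (?B (?B x)) (?b (?B y) (?A z)) + ?b (?B (?B y)) (?b (?B z) (?A x)) +
          ?b (?B (?B z)) (?b (?B x) (?A y)) = 0" for x y z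
    proof -
      obtain p a where x: "x = (p, a)" by fastforce
      obtain q b where y: "y = (q, b)" by fastforce
      obtain r c where z: "z = (r, c)" by fastforce
      show ?thesis
        unfolding x y z
        by (simp add: semidirect_bracket_def sum_map_def jac abVx K' actrs pair0 algebra_simps jac[simplified add.assoc])
    qed
    fix x y
    show "?b (?B x) (?A y) = - ?b (?B y) (?A x)" by (rule skS)
    fix z
    show "?b (?B (?B x)) (?b (?B y) (?A z)) + ?b (?B (?B y)) (?b (?B z) (?A x)) +
          ?b (?B (?B z)) (?b (?B x) (?A y)) = 0" by (rule jacS)
  qed
qed

lemma combo_rep:
  assumes R: "compatible_bihom_lie_rep s br1 br2 \<alpha> \<beta> sV act1 act2 \<alpha>V \<beta>V"
  shows "bihom_lie_rep s (\<lambda>x y. s c (br1 x y) + s d (br2 x y)) \<alpha> \<beta> sV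
           (\<lambda>p v. sV c (act1 p v) + sV d (act2 p v)) \<alpha>V \<beta>V"
proof -
  have vsV: "vector_space sV" and laV: "Vector_Spaces.linear sV sV \<alpha>V"
    and lbV: "Vector_Spaces.linear sV sV \<beta>V" and abV: "\<alpha>V \<circ> \<beta>V = \<beta>V \<circ> \<alpha>V"
    and bl1: "bilinear_map s sV sV act1"
    and ca1: "\<And>p v. act1 (\<alpha> p) (\<alpha>V v) = \<alpha>V (act1 p v)"
    and cb1: "\<And>p v. act1 (\<beta> p) (\<beta>V v) = \<beta>V (act1 p v)"
    and rep1: "\<And>p q v. act1 (br1 (\<beta> p) q) (\<beta>V v) = act1 (\<alpha> (\<beta> p)) (act1 q v) - act1 (\<beta> q) (act1 (\<alpha> p) v)"
    and bl2: "bilinear_map s sV sV act2"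
    and ca2: "\<And>p v. act2 (\<alpha> p) (\<alpha>V v) = \<alpha>V (act2 p v)"
    and cb2: "\<And>p v. act2 (\<beta> p) (\<beta>V v) = \<beta>V (act2 p v)"
    and rep2: "\<And>p q v. act2 (br2 (\<beta> p) q) (\<beta>V v) = act2 (\<alpha> (\<beta> p)) (act2 q v) - act2 (\<beta> q) (act2 (\<alpha> p) v)"
    and cp: "\<And>p q v. act2 (br1 (\<beta> p) q) (\<beta>V v) + act1 (br2 (\<beta> p) q) (\<beta>V v) =
        act1 (\<alpha> (\<beta> p)) (act2 q v) - act2 (\<beta> q) (act1 (\<alpha> p) v)
        + act2 (\<alpha> (\<beta> p)) (act1 q v) - act1 (\<beta> q) (act2 (\<alpha> p) v)"
    using R unfolding compatible_bihom_lie_rep_def bihom_lie_rep_def by blast+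
  have cp': "act1 (br2 (\<beta> p) q) (\<beta>V v) =
        act1 (\<alpha> (\<beta> p)) (act2 q v) - act2 (\<beta> q) (act1 (\<alpha> p) v)
        + act2 (\<alpha> (\<beta> p)) (act1 q v) - act1 (\<beta> q) (act2 (\<alpha> p) v) - act2 (br1 (\<beta> p) q) (\<beta>V v)" for p q v
    using cp[of p q v] by (simp add: eq_diff_eq add.commute)
  have msV: "module sV" using vsV by (simp add: module_iff_vector_space)
  note sVs = module.scale_right_distrib[OF msV] module.scale_scale[OF msV]
    module.scale_right_diff_distrib[OF msV]
  have a1: "Vector_Spaces.linear sV sV (act1 x)" "Vector_Spaces.linear s sV (\<lambda>y. act1 y v)" for x v
    using bl1 unfolding bilinear_map_def by auto
  have a2: "Vector_Spaces.linear sV sV (act2 x)" "Vector_Spaces.linear s sV (\<lambda>y. act2 y v)" for x v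
    using bl2 unfolding bilinear_map_def by auto
  have vs: "vector_space s" using a1(2) by (simp add: linear_iff)
  note A1 = lin_add[OF a1(1)] lin_diff[OF a1(1)] lin_scale[OF a1(1)]
    lin_add[OF a1(2), simplified] lin_diff[OF a1(2), simplified] lin_scale[OF a1(2), simplified]
  note A2 = lin_add[OF a2(1)] lin_diff[OF a2(1)] lin_scale[OF a2(1)]
    lin_add[OF a2(2), simplified] lin_diff[OF a2(2), simplified] lin_scale[OF a2(2), simplified]
  have blc: "bilinear_map s sV sV (\<lambda>p v. sV c (act1 p v) + sV d (act2 p v))"
    unfolding bilinear_map_def linear_iff using vs vsV
    by (simp add: A1 A2 sVs algebra_simps mult.commute)
  show ?thesis
    unfolding bihom_lie_rep_def
  proof (intro conjI allI)
    show "vector_space sV" "Vector_Spaces.linear sV sV \<alpha>V" "Vector_Spaces.linear sV sV \<beta>V"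
      "\<alpha>V \<circ> \<beta>V = \<beta>V \<circ> \<alpha>V" by (fact vsV laV lbV abV)+
    show "bilinear_map s sV sV (\<lambda>p v. sV c (act1 p v) + sV d (act2 p v))" by (fact blc)
    fix p v
    show "sV c (act1 (\<alpha> p) (\<alpha>V v)) + sV d (act2 (\<alpha> p) (\<alpha>V v)) = \<alpha>V (sV c (act1 p v) + sV d (act2 p v))"
      by (simp add: ca1 ca2 lin_add[OF laV] lin_scale[OF laV])
    show "sV c (act1 (\<beta> p) (\<beta>V v)) + sV d (act2 (\<beta> p) (\<beta>V v)) = \<beta>V (sV c (act1 p v) + sV d (act2 p v))"
      by (simp add: cb1 cb2 lin_add[OF lbV] lin_scale[OF lbV])
  next
    fix p q v
    show "sV c (act1 (s c (br1 (\<beta> p) q) + s d (br2 (\<beta> p) q)) (\<beta>V v)) +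
          sV d (act2 (s c (br1 (\<beta> p) q) + s d (br2 (\<beta> p) q)) (\<beta>V v)) =
          sV c (act1 (\<alpha> (\<beta> p)) (sV c (act1 q v) + sV d (act2 q v))) +
          sV d (act2 (\<alpha> (\<beta> p)) (sV c (act1 q v) + sV d (act2 q v))) -
          (sV c (act1 (\<beta> q) (sV c (act1 (\<alpha> p) v) + sV d (act2 (\<alpha> p) v))) +
           sV d (act2 (\<beta> q) (sV c (act1 (\<alpha> p) v) + sV d (act2 (\<alpha> p) v))))"
      by (simp add: A1 A2 sVs rep1 rep2 cp' algebra_simps mult.commute)
  qed
qed

lemma combo_bracket:
  assumes "vector_space sV"
  shows "(\<lambda>x y. sum_scale s sV c (semidirect_bracket br1 act1 \<alpha> \<beta> \<alpha>V \<beta>V x y) +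
                 sum_scale s sV d (semidirect_bracket br2 act2 \<alpha> \<beta> \<alpha>V \<beta>V x y)) =
         semidirect_bracket (\<lambda>x y. s c (br1 x y) + s d (br2 x y))
           (\<lambda>p v. sV c (act1 p v) + sV d (act2 p v)) \<alpha> \<beta> \<alpha>V \<beta>V"
proof -
  have msV: "module sV" using assms by (simp add: module_iff_vector_space)
  show ?thesis
    by (simp add: fun_eq_iff sum_scale_def semidirect_bracket_def
        module.scale_right_diff_distrib[OF msV] algebra_simps)
qed

theorem proposition3p6:
  fixes s :: "'k::field \<Rightarrow> 'g::ab_group_add \<Rightarrow> 'g"
    and sV :: "'k \<Rightarrow> 'v::ab_group_add \<Rightarrow> 'v"
    and br1 br2 :: "'g \<Rightarrow> 'g \<Rightarrow> 'g"
    and \<alpha> \<beta> :: "'g \<Rightarrow> 'g"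
    and act1 act2 :: "'g \<Rightarrow> 'v \<Rightarrow> 'v"
    and \<alpha>V \<beta>V :: "'v \<Rightarrow> 'v"
  assumes "compatible_bihom_lie_algebra s br1 br2 \<alpha> \<beta>"
    and "compatible_bihom_lie_rep s br1 br2 \<alpha> \<beta> sV act1 act2 \<alpha>V \<beta>V"
    and "bij \<alpha>" and "bij \<beta>" and "bij \<alpha>V" and "bij \<beta>V"
  shows "compatible_bihom_lie_algebra (sum_scale s sV)
           (semidirect_bracket br1 act1 \<alpha> \<beta> \<alpha>V \<beta>V)
           (semidirect_bracket br2 act2 \<alpha> \<beta> \<alpha>V \<beta>V)
           (sum_map \<alpha> \<alpha>V) (sum_map \<beta> \<beta>V)"
proof -
  have A1: "bihom_lie_algebra s br1 \<alpha> \<beta>" and A2: "bihom_lie_algebra s br2 \<alpha> \<beta>"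
    and Ac: "\<And>c d. bihom_lie_algebra s (\<lambda>x y. s c (br1 x y) + s d (br2 x y)) \<alpha> \<beta>"
    using assms(1) unfolding compatible_bihom_lie_algebra_def by blast+
  have R1: "bihom_lie_rep s br1 \<alpha> \<beta> sV act1 \<alpha>V \<beta>V" and R2: "bihom_lie_rep s br2 \<alpha> \<beta> sV act2 \<alpha>V \<beta>V"
    using assms(2) unfolding compatible_bihom_lie_rep_def by blast+
  have vsV: "vector_space sV" using R1 unfolding bihom_lie_rep_def by blast
  show ?thesis
    unfolding compatible_bihom_lie_algebra_def
  proof (intro conjI allI)
    show "bihom_lie_algebra (sum_scale s sV) (semidirect_bracket br1 act1 \<alpha> \<beta> \<alpha>V \<beta>V)
        (sum_map \<alpha> \<alpha>V) (sum_map \<beta> \<beta>V)"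
      by (rule semidirect[OF A1 R1 assms(3-6)])
    show "bihom_lie_algebra (sum_scale s sV) (semidirect_bracket br2 act2 \<alpha> \<beta> \<alpha>V \<beta>V)
        (sum_map \<alpha> \<alpha>V) (sum_map \<beta> \<beta>V)"
      by (rule semidirect[OF A2 R2 assms(3-6)])
    fix c d
    show "bihom_lie_algebra (sum_scale s sV)
        (\<lambda>x y. sum_scale s sV c (semidirect_bracket br1 act1 \<alpha> \<beta> \<alpha>V \<beta>V x y) +
               sum_scale s sV d (semidirect_bracket br2 act2 \<alpha> \<beta> \<alpha>V \<beta>V x y))
        (sum_map \<alpha> \<alpha>V) (sum_map \<beta> \<beta>V)"
      unfolding combo_bracket[OF vsV]
      by (rule semidirect[OF Ac combo_rep[OF assms(2)] assms(3-6)])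
  qed
qed

end
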